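(* Let $G$ and $H$ be connected nontrivial graphs, let $u,x\in V(G)$ and $v,y\in V(H)$. Then $(u,v)$ and $(x,y)$ are mutually maximally distant vertices in the strong product $G\boxtimes H$ if and only if one of the following conditions holds: (i) $u,x$ are mutually maximally distant in $G$ and $v,y$ are mutually maximally distant in $H$; (ii) $u,x$ are mutually maximally distant in $G$ and $v=y$; (iii) $v,y$ are mutually maximally distant in $H$ and $u=x$; (iv) $u,x$ are mutually maximally distant in $G$ and $d_G(u,x)>d_H(v,y)$; (v) $v,y$ are mutually maximally distant in $H$ and $d_G(u,x)<d_H(v,y)$.
   Context: All graphs are simple; $d_G$ denotes the shortest-path distance in $G$, and $N_G(u)$ the open neighborhood of $u$. A vertex $u$ is maximally distant from $v$ in $G$ if for every $w\in N_G(u)$, $d_G(v,w)\le d_G(u,v)$; $u$ and $v$ are mutually maximally distant if $u$ is maximally distant from $v$ and $v$ is maximally distant from $u$. The strong product $G\boxtimes H$ has vertex set $V(G)\times V(H)$, with $(a,b)$ and $(c,d)$ adjacent iff either ($a=c$ and $bd\in E(H)$), or ($ac\in E(G)$ and $b=d$), or ($ac\in E(G)$ and $bd\in E(H)$). A graph is nontrivial if it has at least two vertices. *)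

theory Defs
  imports Main
begin

record 'a sgraph =
  verts :: "'a set"
  adj :: "'a \<Rightarrow> 'a \<Rightarrow> bool"

definition simple_graph :: "'a sgraph \<Rightarrow> bool" where
  "simple_graph G \<longleftrightarrow> finite (verts G) \<and>
     (\<forall>x y. adj G x y \<longrightarrow> x \<in> verts G \<and> y \<in> verts G) \<and>
     (\<forall>x y. adj G x y \<longrightarrow> adj G y x) \<and>
     (\<forall>x. \<not> adj G x x)"

definition walk_of_len :: "'a sgraph \<Rightarrow> 'a \<Rightarrow> 'a \<Rightarrow> nat \<Rightarrow> bool" where
  "walk_of_len G x y n \<longleftrightarrow> (\<exists>p :: nat \<Rightarrow> 'a. p 0 = x \<and> p n = y \<and>
     (\<forall>i\<le>n. p i \<in> verts G) \<and> (\<forall>i<n. adj G (p i) (p (Suc i))))"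

definition connected_graph :: "'a sgraph \<Rightarrow> bool" where
  "connected_graph G \<longleftrightarrow> verts G \<noteq> {} \<and>
     (\<forall>x\<in>verts G. \<forall>y\<in>verts G. \<exists>n. walk_of_len G x y n)"

definition nontrivial :: "'a sgraph \<Rightarrow> bool" where
  "nontrivial G \<longleftrightarrow> 2 \<le> card (verts G)"

(* shortest-path distance (meaningful for vertices of a connected graph) *)
definition dist :: "'a sgraph \<Rightarrow> 'a \<Rightarrow> 'a \<Rightarrow> nat" where
  "dist G x y = (LEAST n. walk_of_len G x y n)"

definition nbhd :: "'a sgraph \<Rightarrow> 'a \<Rightarrow> 'a set" where
  "nbhd G u = {w. adj G u w}"

definition max_distant :: "'a sgraph \<Rightarrow> 'a \<Rightarrow> 'a \<Rightarrow> bool" where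
  "max_distant G u v \<longleftrightarrow> (\<forall>w\<in>nbhd G u. dist G v w \<le> dist G u v)"

definition mutually_max_distant :: "'a sgraph \<Rightarrow> 'a \<Rightarrow> 'a \<Rightarrow> bool" where
  "mutually_max_distant G u v \<longleftrightarrow> max_distant G u v \<and> max_distant G v u"

definition strong_product :: "'a sgraph \<Rightarrow> 'b sgraph \<Rightarrow> ('a \<times> 'b) sgraph" where
  "strong_product G H = \<lparr> verts = verts G \<times> verts H,
     adj = (\<lambda>(a,b) (c,d). (a = c \<and> adj H b d) \<or> (adj G a c \<and> b = d) \<or> (adj G a c \<and> adj H b d)) \<rparr>"

end

theory Submission
  imports Defs
begin

lemma walk_snoc:
  assumes "simple_graph G" "walk_of_len G x y n" "adj G y z"
  shows "walk_of_len G x z (Suc n)"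
proof -
  obtain p where p: "p 0 = x" "p n = y" "\<forall>i\<le>n. p i \<in> verts G" "\<forall>i<n. adj G (p i) (p (Suc i))"
    using assms(2) unfolding walk_of_len_def by blast
  have z: "z \<in> verts G" using assms(1,3) unfolding simple_graph_def by blast
  let ?q = "p(Suc n := z)"
  have "?q 0 = x" using p by simp
  moreover have "?q (Suc n) = z" by simp
  moreover have "\<forall>i\<le>Suc n. ?q i \<in> verts G" using p z by (auto simp: le_Suc_eq)
  moreover have "\<forall>i<Suc n. adj G (?q i) (?q (Suc i))"
    using p assms(3) by (auto simp: less_Suc_eq)
  ultimately show ?thesis unfolding walk_of_len_def by blast
qed

lemma walk_rev:
  assumes "simple_graph G" "walk_of_len G x y n"
  shows "walk_of_len G y x n"
proof -
  obtain p where p: "p 0 = x" "p n = y" "\<forall>i\<le>n. p i \<in> verts G" "\<forall>i<n. adj G (p i) (p (Suc i))"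
    using assms(2) unfolding walk_of_len_def by blast
  let ?q = "\<lambda>i. p (n - i)"
  have "\<forall>i<n. adj G (?q i) (?q (Suc i))"
  proof (intro allI impI)
    fix i assume i: "i < n"
    then have e: "n - i = Suc (n - Suc i)" by simp
    have "adj G (p (n - Suc i)) (p (Suc (n - Suc i)))" using p(4) i by simp
    then show "adj G (?q i) (?q (Suc i))" using assms(1) e unfolding simple_graph_def by metis
  qed
  moreover have "\<forall>i\<le>n. ?q i \<in> verts G" using p by simp
  ultimately show ?thesis unfolding walk_of_len_def using p by (intro exI[of _ ?q]) simp
qed

lemma dist_walk:
  assumes "connected_graph G" "x \<in> verts G" "y \<in> verts G"
  shows "walk_of_len G x y (dist G x y)"
  using assms unfolding connected_graph_def dist_def by (meson LeastI_ex)

lemma dist_le: "walk_of_len G x y n \<Longrightarrow> dist G x y \<le> n"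
  unfolding dist_def by (rule Least_le)

lemma dist_refl: "x \<in> verts G \<Longrightarrow> dist G x x = 0"
proof -
  assume "x \<in> verts G"
  then have "walk_of_len G x x 0" unfolding walk_of_len_def by (intro exI[of _ "\<lambda>_. x"]) simp
  then show ?thesis using dist_le by fastforce
qed

lemma dist_0:
  assumes "connected_graph G" "x \<in> verts G" "y \<in> verts G" "dist G x y = 0"
  shows "x = y"
  using dist_walk[OF assms(1-3)] assms(4) unfolding walk_of_len_def by auto

lemma dist_sym:
  assumes "simple_graph G" "connected_graph G" "x \<in> verts G" "y \<in> verts G"
  shows "dist G x y = dist G y x"
  using dist_le[OF walk_rev[OF assms(1) dist_walk[OF assms(2,3,4)]]]
    dist_le[OF walk_rev[OF assms(1) dist_walk[OF assms(2,4,3)]]] by simp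

lemma dist_adj:
  assumes "simple_graph G" "connected_graph G" "x \<in> verts G" "w \<in> verts G" "adj G w z"
  shows "dist G x z \<le> dist G x w + 1"
  using dist_le[OF walk_snoc[OF assms(1) dist_walk[OF assms(2,3,4)] assms(5)]] by simp

lemma prod_walk:
  assumes "walk_of_len G u x m" "walk_of_len H v y n"
  shows "walk_of_len (strong_product G H) (u,v) (x,y) (max m n)"
proof -
  obtain p where p: "p 0 = u" "p m = x" "\<forall>i\<le>m. p i \<in> verts G" "\<forall>i<m. adj G (p i) (p (Suc i))"
    using assms(1) unfolding walk_of_len_def by blast
  obtain q where q: "q 0 = v" "q n = y" "\<forall>i\<le>n. q i \<in> verts H" "\<forall>i<n. adj H (q i) (q (Suc i))"
    using assms(2) unfolding walk_of_len_def by blast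
  let ?r = "\<lambda>i. (p (min i m), q (min i n))"
  have "\<forall>i<max m n. adj (strong_product G H) (?r i) (?r (Suc i))"
  proof (intro allI impI)
    fix i assume i: "i < max m n"
    have a: "(i < m \<and> adj G (p (min i m)) (p (min (Suc i) m))) \<or> (\<not> i < m \<and> p (min i m) = p (min (Suc i) m))"
      using p(4) by (cases "i < m") (auto simp: min_def)
    have b: "(i < n \<and> adj H (q (min i n)) (q (min (Suc i) n))) \<or> (\<not> i < n \<and> q (min i n) = q (min (Suc i) n))"
      using q(4) by (cases "i < n") (auto simp: min_def)
    show "adj (strong_product G H) (?r i) (?r (Suc i))"
      using a b i unfolding strong_product_def by auto
  qed
  moreover have "\<forall>i\<le>max m n. ?r i \<in> verts (strong_product G H)"
    using p q unfolding strong_product_def by auto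
  moreover have "?r 0 = (u,v)" "?r (max m n) = (x,y)" using p q by (auto simp: min_def)
  ultimately show ?thesis unfolding walk_of_len_def by (intro exI[of _ ?r]) simp
qed

lemma prod_lower_fst:
  assumes "simple_graph G" "connected_graph G" "walk_of_len (strong_product G H) s t k"
  shows "dist G (fst s) (fst t) \<le> k"
proof -
  obtain r where r: "r 0 = s" "r k = t" "\<forall>i\<le>k. r i \<in> verts (strong_product G H)"
     "\<forall>i<k. adj (strong_product G H) (r i) (r (Suc i))"
    using assms(3) unfolding walk_of_len_def by blast
  have V: "\<And>i. i \<le> k \<Longrightarrow> fst (r i) \<in> verts G" using r(3) unfolding strong_product_def by auto
  have "\<forall>i\<le>k. dist G (fst s) (fst (r i)) \<le> i"
  proof (intro allI)
    fix i show "i \<le> k \<longrightarrow> dist G (fst s) (fst (r i)) \<le> i"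
    proof (induction i)
      case 0 then show ?case using r(1) V[of 0] dist_refl by auto
    next
      case (Suc i)
      show ?case
      proof
        assume i: "Suc i \<le> k"
        then have IH: "dist G (fst s) (fst (r i)) \<le> i" using Suc by simp
        have "adj (strong_product G H) (r i) (r (Suc i))" using r(4) i by simp
        then have "fst (r i) = fst (r (Suc i)) \<or> adj G (fst (r i)) (fst (r (Suc i)))"
          unfolding strong_product_def by (cases "r i"; cases "r (Suc i)") auto
        then show "dist G (fst s) (fst (r (Suc i))) \<le> Suc i"
        proof
          assume "fst (r i) = fst (r (Suc i))" then show ?thesis using IH by simp
        next
          assume "adj G (fst (r i)) (fst (r (Suc i)))"
          from dist_adj[OF assms(1,2) _ _ this] V[of 0] V[of i] i r(1) IH
          show ?thesis by fastforce
        qed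
      qed
    qed
  qed
  then show ?thesis using r(2) by auto
qed

lemma prod_lower_snd:
  assumes "simple_graph H" "connected_graph H" "walk_of_len (strong_product G H) s t k"
  shows "dist H (snd s) (snd t) \<le> k"
proof -
  obtain r where r: "r 0 = s" "r k = t" "\<forall>i\<le>k. r i \<in> verts (strong_product G H)"
     "\<forall>i<k. adj (strong_product G H) (r i) (r (Suc i))"
    using assms(3) unfolding walk_of_len_def by blast
  have V: "\<And>i. i \<le> k \<Longrightarrow> snd (r i) \<in> verts H" using r(3) unfolding strong_product_def by auto
  have "\<forall>i\<le>k. dist H (snd s) (snd (r i)) \<le> i"
  proof (intro allI)
    fix i show "i \<le> k \<longrightarrow> dist H (snd s) (snd (r i)) \<le> i"
    proof (induction i)
      case 0 then show ?case using r(1) V[of 0] dist_refl by auto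
    next
      case (Suc i)
      show ?case
      proof
        assume i: "Suc i \<le> k"
        then have IH: "dist H (snd s) (snd (r i)) \<le> i" using Suc by simp
        have "adj (strong_product G H) (r i) (r (Suc i))" using r(4) i by simp
        then have "snd (r i) = snd (r (Suc i)) \<or> adj H (snd (r i)) (snd (r (Suc i)))"
          unfolding strong_product_def by (cases "r i"; cases "r (Suc i)") auto
        then show "dist H (snd s) (snd (r (Suc i))) \<le> Suc i"
        proof
          assume "snd (r i) = snd (r (Suc i))" then show ?thesis using IH by simp
        next
          assume "adj H (snd (r i)) (snd (r (Suc i)))"
          from dist_adj[OF assms(1,2) _ _ this] V[of 0] V[of i] i r(1) IH
          show ?thesis by fastforce
        qed
      qed
    qed
  qed
  then show ?thesis using r(2) by auto
qed

lemma prod_dist: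
  assumes "simple_graph G" "simple_graph H" "connected_graph G" "connected_graph H"
    "u \<in> verts G" "x \<in> verts G" "v \<in> verts H" "y \<in> verts H"
  shows "dist (strong_product G H) (u,v) (x,y) = max (dist G u x) (dist H v y)"
proof -
  have w: "walk_of_len (strong_product G H) (u,v) (x,y) (max (dist G u x) (dist H v y))"
    by (rule prod_walk[OF dist_walk[OF assms(3,5,6)] dist_walk[OF assms(4,7,8)]])
  have le: "dist (strong_product G H) (u,v) (x,y) \<le> max (dist G u x) (dist H v y)"
    using dist_le[OF w] .
  have w2: "walk_of_len (strong_product G H) (u,v) (x,y) (dist (strong_product G H) (u,v) (x,y))"
    unfolding dist_def using w by (rule LeastI)
  show ?thesis using le prod_lower_fst[OF assms(1,3) w2] prod_lower_snd[OF assms(2,4) w2] by simp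
qed


lemma has_nbr:
  assumes "simple_graph G" "connected_graph G" "nontrivial G" "u \<in> verts G"
  shows "\<exists>w. adj G u w"
proof -
  have f: "finite (verts G)" using assms(1) unfolding simple_graph_def by blast
  have "\<exists>w\<in>verts G. w \<noteq> u"
  proof (rule ccontr)
    assume "\<not> ?thesis" then have "verts G \<subseteq> {u}" by blast
    then have "card (verts G) \<le> 1" using card_mono[of "{u}"] by fastforce
    then show False using assms(3) unfolding nontrivial_def by simp
  qed
  then obtain w where w: "w \<in> verts G" "w \<noteq> u" by blast
  then obtain n p where p: "p 0 = u" "p n = w" "\<forall>i<n. adj G (p i) (p (Suc i))"
    using assms(2,4) unfolding connected_graph_def walk_of_len_def by meson
  then have "n > 0" using w by (cases n) auto
  then show ?thesis using p by force
qed

lemma not_mmd_self: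
  assumes "simple_graph G" "connected_graph G" "nontrivial G" "u \<in> verts G"
  shows "\<not> max_distant G u u"
proof
  assume m: "max_distant G u u"
  obtain w where w: "adj G u w" using has_nbr[OF assms] by blast
  then have wv: "w \<in> verts G" using assms(1) unfolding simple_graph_def by blast
  have "dist G u w \<le> 0" using m w dist_refl[OF assms(4)] unfolding max_distant_def nbhd_def by auto
  then have "u = w" using dist_0[OF assms(2,4) wv] by simp
  then show False using w assms(1) unfolding simple_graph_def by blast
qed

lemma md_prod:
  assumes "simple_graph G" "simple_graph H" "connected_graph G" "connected_graph H"
    "u \<in> verts G" "x \<in> verts G" "v \<in> verts H" "y \<in> verts H"
  shows "max_distant (strong_product G H) (u,v) (x,y) \<longleftrightarrow>
    (if dist G u x > dist H v y then max_distant G u x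
     else if dist G u x < dist H v y then max_distant H v y
     else max_distant G u x \<and> max_distant H v y)"
proof -
  let ?P = "strong_product G H"
  define dg where "dg = dist G u x"
  define dh where "dh = dist H v y"
  have sg: "dist G x u = dg" using dist_sym[OF assms(1,3,6,5)] dg_def by simp
  have sh: "dist H y v = dh" using dist_sym[OF assms(2,4,8,7)] dh_def by simp
  have vG: "\<And>a. adj G u a \<Longrightarrow> a \<in> verts G" using assms(1) unfolding simple_graph_def by blast
  have vH: "\<And>b. adj H v b \<Longrightarrow> b \<in> verts H" using assms(2) unfolding simple_graph_def by blast
  have ag: "\<And>a. adj G u a \<Longrightarrow> dist G x a \<le> dg + 1"
    using dist_adj[OF assms(1,3,6,5)] sg by fastforce
  have ah: "\<And>b. adj H v b \<Longrightarrow> dist H y b \<le> dh + 1"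
    using dist_adj[OF assms(2,4,8,7)] sh by fastforce
  have MG: "max_distant G u x \<longleftrightarrow> (\<forall>a. adj G u a \<longrightarrow> dist G x a \<le> dg)"
    unfolding max_distant_def nbhd_def dg_def by auto
  have MH: "max_distant H v y \<longleftrightarrow> (\<forall>b. adj H v b \<longrightarrow> dist H y b \<le> dh)"
    unfolding max_distant_def nbhd_def dh_def by auto
  have MP: "max_distant ?P (u,v) (x,y) \<longleftrightarrow>
     (\<forall>a b. ((a = u \<and> adj H v b) \<or> (adj G u a \<and> b = v) \<or> (adj G u a \<and> adj H v b))
        \<longrightarrow> max (dist G x a) (dist H y b) \<le> max dg dh)"
  proof -
    have "max_distant ?P (u,v) (x,y) \<longleftrightarrow>
     (\<forall>a b. ((a = u \<and> adj H v b) \<or> (adj G u a \<and> b = v) \<or> (adj G u a \<and> adj H v b))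
        \<longrightarrow> dist ?P (x,y) (a,b) \<le> dist ?P (u,v) (x,y))"
      unfolding max_distant_def nbhd_def strong_product_def by auto
    also have "\<dots> \<longleftrightarrow> (\<forall>a b. ((a = u \<and> adj H v b) \<or> (adj G u a \<and> b = v) \<or> (adj G u a \<and> adj H v b))
        \<longrightarrow> max (dist G x a) (dist H y b) \<le> max dg dh)"
    proof -
      have "\<And>a b. ((a = u \<and> adj H v b) \<or> (adj G u a \<and> b = v) \<or> (adj G u a \<and> adj H v b)) \<Longrightarrow>
          dist ?P (x,y) (a,b) = max (dist G x a) (dist H y b)"
      proof -
        fix a b assume "((a = u \<and> adj H v b) \<or> (adj G u a \<and> b = v) \<or> (adj G u a \<and> adj H v b))"
        then have "a \<in> verts G" "b \<in> verts H" using vG vH assms by auto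
        then show "dist ?P (x,y) (a,b) = max (dist G x a) (dist H y b)"
          using prod_dist[OF assms(1-4,6) _ assms(8)] by blast
      qed
      note D1 = this
      have D2: "dist ?P (u,v) (x,y) = max dg dh"
        using prod_dist[OF assms] dg_def dh_def by simp
      show ?thesis
      proof (intro iffI allI impI)
        fix a b assume h: "\<forall>a b. ((a = u \<and> adj H v b) \<or> (adj G u a \<and> b = v) \<or> (adj G u a \<and> adj H v b))
        \<longrightarrow> dist ?P (x,y) (a,b) \<le> dist ?P (u,v) (x,y)"
          and c: "((a = u \<and> adj H v b) \<or> (adj G u a \<and> b = v) \<or> (adj G u a \<and> adj H v b))"
        show "max (dist G x a) (dist H y b) \<le> max dg dh" using h c D1[OF c] D2 by metis
      next
        fix a b assume h: "\<forall>a b. ((a = u \<and> adj H v b) \<or> (adj G u a \<and> b = v) \<or> (adj G u a \<and> adj H v b))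
        \<longrightarrow> max (dist G x a) (dist H y b) \<le> max dg dh"
          and c: "((a = u \<and> adj H v b) \<or> (adj G u a \<and> b = v) \<or> (adj G u a \<and> adj H v b))"
        show "dist ?P (x,y) (a,b) \<le> dist ?P (u,v) (x,y)" using h c D1[OF c] D2 by metis
      qed
    qed
    finally show ?thesis .
  qed
  define L where "L = (\<forall>a b. ((a = u \<and> adj H v b) \<or> (adj G u a \<and> b = v) \<or> (adj G u a \<and> adj H v b))
        \<longrightarrow> max (dist G x a) (dist H y b) \<le> max dg dh)"
  have LG: "L \<Longrightarrow> adj G u a \<Longrightarrow> max (dist G x a) dh \<le> max dg dh" for a
    unfolding L_def using sh by metis
  have LH: "L \<Longrightarrow> adj H v b \<Longrightarrow> max dg (dist H y b) \<le> max dg dh" for b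
    unfolding L_def using sg by metis
  have RL: "L" if A: "\<And>a. adj G u a \<Longrightarrow> dist G x a \<le> k1" and B: "\<And>b. adj H v b \<Longrightarrow> dist H y b \<le> k2"
     and k: "max (max dg k1) (max dh k2) \<le> max dg dh" for k1 k2
  proof -
    have "max (dist G x a) (dist H y b) \<le> max dg dh"
      if c: "((a = u \<and> adj H v b) \<or> (adj G u a \<and> b = v) \<or> (adj G u a \<and> adj H v b))" for a b
    proof -
      have "dist G x a \<le> max dg k1" using c A sg by fastforce
      moreover have "dist H y b \<le> max dh k2" using c B sh by fastforce
      ultimately show ?thesis using k by linarith
    qed
    then show ?thesis unfolding L_def by blast
  qed
  have main: "L \<longleftrightarrow> (if dg > dh then max_distant G u x
     else if dg < dh then max_distant H v y
     else max_distant G u x \<and> max_distant H v y)"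
  proof (cases "dg > dh")
    case True
    have "L \<longleftrightarrow> max_distant G u x"
    proof
      assume "L" then show "max_distant G u x" unfolding MG using LG True by fastforce
    next
      assume "max_distant G u x"
      then show L using RL[of dg "dh+1"] True ah unfolding MG by fastforce
    qed
    then show ?thesis using True by simp
  next
    case F: False
    show ?thesis
    proof (cases "dg < dh")
      case True
      have "L \<longleftrightarrow> max_distant H v y"
      proof
        assume "L" then show "max_distant H v y" unfolding MH using LH True by fastforce
      next
        assume "max_distant H v y"
        then show L using RL[of "dg+1" dh] True ag unfolding MH by fastforce
      qed
      then show ?thesis using True F by simp
    next
      case False
      then have e: "dg = dh" using F by simp
      have "L \<longleftrightarrow> max_distant G u x \<and> max_distant H v y"
      proof
        assume "L" then show "max_distant G u x \<and> max_distant H v y" unfolding MG MH using LG LH e by fastforce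
      next
        assume "max_distant G u x \<and> max_distant H v y"
        then show L using RL[of dg dh] e unfolding MG MH by fastforce
      qed
      then show ?thesis using e by simp
    qed
  qed
  show ?thesis using main MP unfolding L_def dg_def dh_def by simp
qed


theorem lemma6:
  fixes G :: "'a sgraph" and H :: "'b sgraph"
  assumes "simple_graph G" "simple_graph H"
    and "connected_graph G" "connected_graph H"
    and "nontrivial G" "nontrivial H"
    and "u \<in> verts G" "x \<in> verts G" "v \<in> verts H" "y \<in> verts H"
  shows "mutually_max_distant (strong_product G H) (u, v) (x, y) \<longleftrightarrow>
     (mutually_max_distant G u x \<and> mutually_max_distant H v y) \<or>
     (mutually_max_distant G u x \<and> v = y) \<or>
     (mutually_max_distant H v y \<and> u = x) \<or>
     (mutually_max_distant G u x \<and> dist G u x > dist H v y) \<or>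
     (mutually_max_distant H v y \<and> dist G u x < dist H v y)"
proof -
  have sg: "dist G x u = dist G u x" using dist_sym[OF assms(1,3,8,7)] .
  have sh: "dist H y v = dist H v y" using dist_sym[OF assms(2,4,10,9)] .
  note m1 = md_prod[OF assms(1-4,7,8,9,10)]
  note m2 = md_prod[OF assms(1-4,8,7,10,9)]
  have P: "mutually_max_distant (strong_product G H) (u, v) (x, y) \<longleftrightarrow>
    (if dist G u x > dist H v y then mutually_max_distant G u x
     else if dist G u x < dist H v y then mutually_max_distant H v y
     else mutually_max_distant G u x \<and> mutually_max_distant H v y)"
    unfolding mutually_max_distant_def m1 m2 sg sh by auto
  have nG: "\<not> mutually_max_distant G u u" using not_mmd_self[OF assms(1,3,5,7)]
    unfolding mutually_max_distant_def by blast
  have nH: "\<not> mutually_max_distant H v v" using not_mmd_self[OF assms(2,4,6,9)]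
    unfolding mutually_max_distant_def by blast
  have zG: "dist G u x = 0 \<longleftrightarrow> u = x" using dist_0[OF assms(3,7,8)] dist_refl[OF assms(7)] by blast
  have zH: "dist H v y = 0 \<longleftrightarrow> v = y" using dist_0[OF assms(4,9,10)] dist_refl[OF assms(9)] by blast
  show ?thesis
  proof (cases "dist G u x > dist H v y")
    case True then show ?thesis using P zG by auto
  next
    case F: False
    show ?thesis
    proof (cases "dist G u x < dist H v y")
      case True then show ?thesis using P zH F by auto
    next
      case False
      then have e: "dist G u x = dist H v y" using F by simp
      show ?thesis using P e zG zH nG nH by (cases "u = x") auto
    qed
  qed
qed

end
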